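(* Let $\mathbf A\in\mathbb R^{n\times p}$ have columns $\mathbf a_1,\dots,\mathbf a_p$ normalized to zero sample mean and unit norm: $\mathbf 1^T\mathbf a_k=0$ and $\|\mathbf a_k\|_2=1$ for $k=1,\dots,p$, and let $\rho_{ij}=\mathbf a_i^T\mathbf a_j$. Let $\mathbf y\in\mathbb R^n$, let $\mathbf w$ be a weight vector as in the context and $\Delta:=\min\{w_l-w_{l+1}: l=1,\dots,p-1\}$. Let $\widehat{\mathbf x}$ be any minimizer of $\frac12\|\mathbf A\mathbf x-\mathbf y\|_2^2+\Omega_{\mathbf w}(\mathbf x)$ over $\mathbf x\in\mathbb R^p$. Then for every pair $(i,j)$ with $\|\mathbf y\|_2\sqrt{2-2\rho_{ij}\operatorname{sign}(\widehat x_i\widehat x_j)}<\Delta$, we have $|\widehat x_i|=|\widehat x_j|$.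
   Context: $\mathbf w=(w_1,\dots,w_p)\in\mathbb R^p_+$ satisfies $w_1\ge w_2\ge\cdots\ge w_p\ge0$ and $w_1>0$. The ordered weighted $\ell_1$ (OWL) norm is $\Omega_{\mathbf w}(\mathbf x)=\sum_{i=1}^p w_i|x|_{[i]}$, where $|x|_{[i]}$ denotes the $i$-th largest component of $\mathbf x$ in magnitude. $\mathbf 1$ is the all-ones vector; $\operatorname{sign}$ denotes the sign function. *)

theory Defs
  imports Complex_Main
begin

text \<open>Vectors in R^p are functions nat => real, only indices 0..<p matter (0-based).
  Matrices in R^(n x p) are functions nat => nat => real (row, column).\<close>

definition sorted_abs :: "nat \<Rightarrow> (nat \<Rightarrow> real) \<Rightarrow> nat \<Rightarrow> real" where
  "sorted_abs p x k = rev (sort (map (\<lambda>i. \<bar>x i\<bar>) [0..<p])) ! k"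

definition owl :: "nat \<Rightarrow> (nat \<Rightarrow> real) \<Rightarrow> (nat \<Rightarrow> real) \<Rightarrow> real" where
  "owl p w x = (\<Sum>k<p. w k * sorted_abs p x k)"

definition owl_weights :: "nat \<Rightarrow> (nat \<Rightarrow> real) \<Rightarrow> bool" where
  "owl_weights p w \<longleftrightarrow> 0 < p \<and> (\<forall>k. k + 1 < p \<longrightarrow> w (k + 1) \<le> w k)
      \<and> w (p - 1) \<ge> 0 \<and> w 0 > 0"

definition owl_objective :: "nat \<Rightarrow> nat \<Rightarrow> (nat \<Rightarrow> nat \<Rightarrow> real) \<Rightarrow> (nat \<Rightarrow> real)
    \<Rightarrow> (nat \<Rightarrow> real) \<Rightarrow> (nat \<Rightarrow> real) \<Rightarrow> real" where
  "owl_objective n p A y w x =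
     (1/2) * (\<Sum>r<n. ((\<Sum>k<p. A r k * x k) - y r)\<^sup>2) + owl p w x"

definition corr :: "nat \<Rightarrow> (nat \<Rightarrow> nat \<Rightarrow> real) \<Rightarrow> nat \<Rightarrow> nat \<Rightarrow> real" where
  "corr n A i j = (\<Sum>r<n. A r i * A r j)"

definition norm2 :: "nat \<Rightarrow> (nat \<Rightarrow> real) \<Rightarrow> real" where
  "norm2 n y = sqrt (\<Sum>r<n. (y r)\<^sup>2)"

definition weight_gap :: "nat \<Rightarrow> (nat \<Rightarrow> real) \<Rightarrow> real" where
  "weight_gap p w = Min {w l - w (l + 1) | l. l + 1 < p}"

end

theory Submission
  imports Defs "HOL-Library.Multiset" "HOL-Analysis.Convex"
begin

lemma sort_perturb:
  fixes vs :: "real list" and a b t :: real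
  assumes i: "i < length vs" and j: "j < length vs" and ai: "vs!i = a" and bj: "vs!j = b"
    and ba: "b < a" and t: "0 < t"
    and gap: "\<And>u v. u \<in> set vs \<Longrightarrow> v \<in> set vs \<Longrightarrow> u < v \<Longrightarrow> 2*t \<le> v - u"
  shows "\<exists>\<alpha> \<delta>. \<delta> < \<alpha> \<and> \<alpha> < length vs \<and> sort vs ! \<alpha> = a \<and> sort vs ! \<delta> = b \<and>
     sort (vs[i:=a-t, j:=b+t]) = (sort vs)[\<alpha> := a-t, \<delta> := b+t]"
proof -
  define L where "L = sort vs"
  have sL: "sorted L" and lenL: "length L = length vs" and setL: "set L = set vs"
    and msL: "mset L = mset vs" by (auto simp: L_def)
  have ij: "i \<noteq> j" using ai bj ba by auto
  have "a \<in> set L" using ai i setL by (metis nth_mem)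
  then have exa: "\<exists>k. k < length L \<and> L!k = a" by (simp add: in_set_conv_nth)
  define \<alpha> where "\<alpha> = (LEAST k. k < length L \<and> L!k = a)"
  have \<alpha>: "\<alpha> < length L" "L!\<alpha> = a" using LeastI_ex[OF exa] unfolding \<alpha>_def by auto
  have \<alpha>min: "L!k \<noteq> a" if "k < \<alpha>" for k
    using not_less_Least[of k "\<lambda>k. k < length L \<and> L!k = a"] that \<alpha> unfolding \<alpha>_def by auto
  have "b \<in> set L" using bj j setL by (metis nth_mem)
  then obtain kb where kb: "kb < length L \<and> L!kb = b" by (auto simp: in_set_conv_nth)
  define \<delta> where "\<delta> = (GREATEST k. k < length L \<and> L!k = b)"
  have \<delta>: "\<delta> < length L" "L!\<delta> = b"
    using GreatestI_nat[of "\<lambda>k. k < length L \<and> L!k = b" kb "length L", OF kb] unfolding \<delta>_def by auto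
  have \<delta>max: "L!k \<noteq> b" if "\<delta> < k" "k < length L" for k
    using Greatest_le_nat[of "\<lambda>k. k < length L \<and> L!k = b" k "length L"] that unfolding \<delta>_def by force
  have da: "\<delta> < \<alpha>"
  proof (rule ccontr)
    assume "\<not> \<delta> < \<alpha>"
    then have "L!\<alpha> \<le> L!\<delta>" using sL \<delta> by (metis not_less sorted_nth_mono)
    then show False using \<alpha> \<delta> ba by auto
  qed
  have below: "L!k \<le> a - 2*t" if "k < \<alpha>" for k
  proof -
    have "L!k \<le> a" using sL \<alpha> that by (metis less_imp_le_nat sorted_nth_mono)
    then have "L!k < a" using \<alpha>min[OF that] by auto
    moreover have "L!k \<in> set vs" using that \<alpha> setL by (metis nth_mem order.strict_trans)
    moreover have "a \<in> set vs" using \<alpha> setL by (metis nth_mem)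
    ultimately show ?thesis using gap by force
  qed
  have above: "b + 2*t \<le> L!k" if "\<delta> < k" "k < length L" for k
  proof -
    have "b \<le> L!k" using sL \<delta> that by (metis less_imp_le_nat sorted_nth_mono)
    then have "b < L!k" using \<delta>max[OF that] by auto
    moreover have "L!k \<in> set vs" using that setL by (metis nth_mem)
    moreover have "b \<in> set vs" using \<delta> setL by (metis nth_mem)
    ultimately show ?thesis using gap by force
  qed
  have abgap: "b + 2*t \<le> a" using gap[of b a] ai bj i j ba using nth_mem by fastforce
  define L' where "L' = L[\<alpha> := a-t, \<delta> := b+t]"
  have lenL': "length L' = length L" by (simp add: L'_def)
  have nthL': "L'!k = (if k = \<delta> then b+t else if k = \<alpha> then a-t else L!k)" if "k < length L" for k
    using that \<alpha> \<delta> by (simp add: L'_def nth_list_update)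
  have "sorted L'"
  proof (unfold sorted_iff_nth_mono, intro allI impI)
    fix k k' assume kk: "k \<le> k'" and k': "k' < length L'"
    have k: "k < length L" using kk k' lenL' by simp
    have k'L: "k' < length L" using k' lenL' by simp
    have m: "L!k \<le> L!k'" using sL kk k'L by (simp add: sorted_nth_mono)
    show "L'!k \<le> L'!k'"
    proof (cases "k = k'")
      case True then show ?thesis by simp
    next
      case False
      then have kl: "k < k'" using kk by simp
      show ?thesis
        unfolding nthL'[OF k] nthL'[OF k'L]
        using kl m da t abgap below[of k] above[of k'] k'L \<alpha> \<delta>
        by (auto; smt (verit, best) sL sorted_nth_mono less_imp_le_nat)
    qed
  qed
  moreover have "mset L' = mset (vs[i:=a-t, j:=b+t])"
    using \<alpha> \<delta> da i j ij ai bj msL lenL by (simp add: L'_def mset_update nth_list_update)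
  ultimately have "sort (vs[i:=a-t, j:=b+t]) = L'" by (intro properties_for_sort) auto
  then show ?thesis using da \<alpha> \<delta> lenL unfolding L'_def L_def by auto
qed

lemma lin_pert:
  fixes A :: "nat \<Rightarrow> nat \<Rightarrow> real"
  assumes "i < p" "j < p" "i \<noteq> j"
  shows "(\<Sum>k<p. A r k * (x k + (if k = i then - t*si else 0) + (if k = j then t*\<sigma> else 0)))
    = (\<Sum>k<p. A r k * x k) + t * (\<sigma> * A r j - si * A r i)"
proof -
  have "(\<Sum>k<p. A r k * (x k + (if k = i then - t*si else 0) + (if k = j then t*\<sigma> else 0)))
     = (\<Sum>k<p. A r k * x k) + (\<Sum>k<p. (if k = i then A r k * (- t*si) else 0)) + (\<Sum>k<p. (if k = j then A r k * (t*\<sigma>) else 0))"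
    by (simp add: sum.distrib distrib_left if_distrib[of "\<lambda>z. A r _ * z"] cong: if_cong)
  also have "\<dots> = (\<Sum>k<p. A r k * x k) + t * (\<sigma> * A r j - si * A r i)"
    using assms by (simp add: sum.delta algebra_simps)
  finally show ?thesis .
qed

lemma sorted_abs_rev:
  assumes "k < p"
  shows "sorted_abs p x k = sort (map (\<lambda>i. \<bar>x i\<bar>) [0..<p]) ! (p - 1 - k)"
  using assms unfolding sorted_abs_def by (simp add: rev_nth)

lemma owl_sum:
  "owl p w x = (\<Sum>m<p. w (p-1-m) * sort (map (\<lambda>k. \<bar>x k\<bar>) [0..<p]) ! m)"
proof -
  let ?L = "sort (map (\<lambda>k. \<bar>x k\<bar>) [0..<p])"
  let ?g = "\<lambda>m. w (p-1-m) * ?L ! m"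
  have "owl p w x = (\<Sum>k<p. ?g (p - Suc k))"
    unfolding owl_def by (intro sum.cong) (auto simp: sorted_abs_rev)
  also have "\<dots> = sum ?g {..<p}" by (rule sum.nat_diff_reindex)
  finally show ?thesis .
qed

lemma sorted_abs_nonneg:
  assumes "k < p" shows "0 \<le> sorted_abs p x k"
proof -
  have "sorted_abs p x k \<in> set (rev (sort (map (\<lambda>i. \<bar>x i\<bar>) [0..<p])))"
    unfolding sorted_abs_def using assms by (intro nth_mem) simp
  then show ?thesis by auto
qed

lemma sorted_abs_zero:
  assumes "k < p" shows "sorted_abs p (\<lambda>_. 0) k = 0"
proof -
  have "sorted_abs p (\<lambda>_. 0) k \<in> set (rev (sort (map (\<lambda>i. \<bar>(0::real)\<bar>) [0..<p])))"
    unfolding sorted_abs_def using assms by (intro nth_mem) simp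
  then show ?thesis using assms by (cases p) auto
qed

lemma w_mono:
  assumes "owl_weights p w" "k \<le> k'" "k' < p"
  shows "w k' \<le> w k"
  using assms(2,3)
proof (induction k' rule: dec_induct)
  case base then show ?case by simp
next
  case (step m)
  then have "w (m+1) \<le> w m" using assms(1) unfolding owl_weights_def by auto
  then show ?case using step by simp
qed

lemma w_nonneg:
  assumes "owl_weights p w" "k < p" shows "0 \<le> w k"
proof -
  have "w (p-1) \<le> w k" using assms by (intro w_mono) auto
  then show ?thesis using assms unfolding owl_weights_def by auto
qed

lemma w_gap:
  assumes "owl_weights p w" "l < l'" "l' < p"
  shows "weight_gap p w \<le> w l - w l'"
proof -
  have S: "{w l - w (l + 1) | l. l + 1 < p} = (\<lambda>l. w l - w (l+1)) ` {..<p-1}" by auto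
  have "weight_gap p w \<le> w l - w (l+1)"
    unfolding weight_gap_def S using assms by (intro Min_le) auto
  moreover have "w l' \<le> w (l+1)" using assms by (intro w_mono) auto
  ultimately show ?thesis by simp
qed

lemma owl_nonneg:
  assumes "owl_weights p w" shows "0 \<le> owl p w x"
  unfolding owl_def using assms by (intro sum_nonneg mult_nonneg_nonneg w_nonneg sorted_abs_nonneg) auto

lemma owl_zero: "owl p w (\<lambda>_. 0) = 0"
  unfolding owl_def by (simp add: sorted_abs_zero)

lemma key:
  fixes n p :: nat and A :: "nat \<Rightarrow> nat \<Rightarrow> real" and y w xh :: "nat \<Rightarrow> real"
    and i j :: nat
  assumes wts: "owl_weights p w"
    and unit: "\<And>k. k < p \<Longrightarrow> (\<Sum>r<n. (A r k)\<^sup>2) = 1"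
    and minim: "\<And>x. owl_objective n p A y w xh \<le> owl_objective n p A y w x"
    and ij: "i < p" "j < p"
    and cond: "norm2 n y * sqrt (2 - 2 * corr n A i j * sgn (xh i * xh j)) < weight_gap p w"
    and gt: "\<bar>xh j\<bar> < \<bar>xh i\<bar>"
  shows False
proof -
  define a where "a = \<bar>xh i\<bar>"
  define b where "b = \<bar>xh j\<bar>"
  have ba: "b < a" and b0: "0 \<le> b" using gt by (auto simp: a_def b_def)
  have ineqj: "i \<noteq> j" using gt by auto
  define \<rho> where "\<rho> = corr n A i j"
  define si where "si = sgn (xh i)"
  define \<sigma> where "\<sigma> = (if xh j \<noteq> 0 then sgn (xh j) else si * (if \<rho> \<ge> 0 then 1 else -1))"
  have xi0: "xh i \<noteq> 0" using gt by auto
  have si2: "si * si = 1" using xi0 by (simp add: si_def sgn_if)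
  have sig2: "\<sigma> * \<sigma> = 1" using si2 by (auto simp: \<sigma>_def sgn_if)
  define K where "K = 2 - 2 * \<rho> * sgn (xh i * xh j)"
  have sK: "\<rho> * sgn (xh i * xh j) \<le> si * \<sigma> * \<rho>"
  proof (cases "xh j = 0")
    case True
    then show ?thesis using si2 by (auto simp: \<sigma>_def algebra_simps)
  next
    case False
    then show ?thesis by (simp add: \<sigma>_def si_def sgn_mult)
  qed
  define d where "d r = \<sigma> * A r j - si * A r i" for r
  define D where "D = (\<Sum>r<n. (d r)\<^sup>2)"
  have "D = \<sigma>*\<sigma> * (\<Sum>r<n. (A r j)\<^sup>2) + si*si * (\<Sum>r<n. (A r i)\<^sup>2) - 2 * si * \<sigma> * \<rho>"
    unfolding D_def d_def \<rho>_def corr_def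
    by (simp add: power2_eq_square algebra_simps sum.distrib sum_distrib_left sum_subtractf)
  then have Deq: "D = 2 - 2 * si * \<sigma> * \<rho>" using si2 sig2 unit ij by simp
  have DK: "D \<le> K" using Deq sK unfolding K_def by simp
  have D0: "0 \<le> D" unfolding D_def by (simp add: sum_nonneg)
  define e where "e r = (\<Sum>k<p. A r k * xh k) - y r" for r
  define E where "E = (\<Sum>r<n. (e r)\<^sup>2)"
  define Y where "Y = (\<Sum>r<n. (y r)\<^sup>2)"
  have objx: "owl_objective n p A y w xh = 1/2 * E + owl p w xh"
    unfolding owl_objective_def E_def e_def by simp
  have "owl_objective n p A y w xh \<le> owl_objective n p A y w (\<lambda>_. 0)" by (rule minim)
  also have "\<dots> = 1/2 * Y" unfolding owl_objective_def Y_def by (simp add: owl_zero)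
  finally have EY: "E \<le> Y" using objx owl_nonneg[OF wts, of xh] by simp
  have E0: "0 \<le> E" unfolding E_def by (simp add: sum_nonneg)
  have "(\<Sum>r<n. e r * d r) \<le> sqrt ((\<Sum>r<n. e r * d r)\<^sup>2)" by simp
  also have "\<dots> \<le> sqrt (E * D)" unfolding E_def D_def
    by (rule real_sqrt_le_mono) (rule Cauchy_Schwarz_ineq_sum)
  also have "\<dots> \<le> sqrt Y * sqrt K" using EY DK E0 D0
    by (simp add: real_sqrt_mult mult_mono)
  finally have ed: "(\<Sum>r<n. e r * d r) \<le> norm2 n y * sqrt K" by (simp add: norm2_def Y_def)
  define \<Delta> where "\<Delta> = weight_gap p w"
  define \<epsilon> where "\<epsilon> = \<Delta> - norm2 n y * sqrt K"
  have eps: "0 < \<epsilon>" using cond unfolding \<epsilon>_def \<Delta>_def K_def \<rho>_def by simp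
  define vals where "vals = map (\<lambda>k. \<bar>xh k\<bar>) [0..<p]"
  define G where "G = {v - u | u v. u \<in> set vals \<and> v \<in> set vals \<and> u < v}"
  have Gfin: "finite G"
  proof -
    have "G \<subseteq> (\<lambda>(u,v). v - u) ` (set vals \<times> set vals)" unfolding G_def by auto
    then show ?thesis by (rule finite_subset) auto
  qed
  have avals: "a \<in> set vals" and bvals: "b \<in> set vals" using ij by (auto simp: vals_def a_def b_def)
  have abG: "a - b \<in> G" unfolding G_def using avals bvals ba by blast
  define g where "g = Min G"
  have gpos: "0 < g" unfolding g_def using Gfin abG by (subst Min_gr_iff) (auto simp: G_def)
  have gle: "g \<le> v - u" if "u \<in> set vals" "v \<in> set vals" "u < v" for u v
    unfolding g_def using Gfin that by (intro Min_le) (auto simp: G_def)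
  define t where "t = min (g/2) (\<epsilon> / (D+1))"
  have t0: "0 < t" using gpos eps D0 by (simp add: t_def)
  have tg: "2 * t \<le> g" by (simp add: t_def)
  have tab: "2 * t \<le> a - b" using tg gle[OF bvals avals ba] by simp
  have ta: "t < a" using tab b0 t0 by simp
  define x' where "x' k = xh k + (if k = i then - t*si else 0) + (if k = j then t*\<sigma> else 0)" for k
  have x'i: "\<bar>x' i\<bar> = a - t"
  proof -
    have "x' i = si * (a - t)" using ineqj unfolding x'_def a_def si_def
      by (simp add: algebra_simps abs_sgn)
    then show ?thesis using si2 ta by (simp add: abs_mult si_def abs_sgn_eq xi0)
  qed
  have x'j: "\<bar>x' j\<bar> = b + t"
  proof (cases "xh j = 0")
    case True
    then have "x' j = t * \<sigma>" using ineqj unfolding x'_def by simp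
    moreover have "\<bar>\<sigma>\<bar> = 1" using xi0 True by (simp add: \<sigma>_def si_def abs_mult)
    ultimately show ?thesis using t0 True by (simp add: abs_mult b_def)
  next
    case False
    then have "x' j = sgn (xh j) * (b + t)" using ineqj unfolding x'_def b_def \<sigma>_def
      by (simp add: algebra_simps abs_sgn)
    then show ?thesis using False b0 t0 by (simp add: abs_mult abs_sgn_eq)
  qed
  have vals': "map (\<lambda>k. \<bar>x' k\<bar>) [0..<p] = vals[i := a - t, j := b + t]"
  proof (rule nth_equalityI)
    fix k assume "k < length (map (\<lambda>k. \<bar>x' k\<bar>) [0..<p])"
    then have k: "k < p" by simp
    show "map (\<lambda>k. \<bar>x' k\<bar>) [0..<p] ! k = vals[i := a - t, j := b + t] ! k"
    proof (cases "k = j")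
      case True then show ?thesis using k by (simp add: vals_def x'j)
    next
      case False
      then show ?thesis
      proof (cases "k = i")
        case True then show ?thesis using k False by (simp add: vals_def x'i)
      next
        case False2: False
        then show ?thesis using k False by (simp add: vals_def x'_def)
      qed
    qed
  qed (simp add: vals_def)
  obtain \<alpha> \<delta> where ad: "\<delta> < \<alpha>" "\<alpha> < length vals" and Lad: "sort vals ! \<alpha> = a" "sort vals ! \<delta> = b"
    and srt: "sort (vals[i:=a-t, j:=b+t]) = (sort vals)[\<alpha> := a-t, \<delta> := b+t]"
  proof -
    have "i < length vals" "j < length vals" "vals!i = a" "vals!j = b"
      using ij by (auto simp: vals_def a_def b_def)
    from sort_perturb[of i vals j a b t, OF this ba t0] gle tg
    have "\<exists>\<alpha> \<delta>. \<delta> < \<alpha> \<and> \<alpha> < length vals \<and> sort vals ! \<alpha> = a \<and> sort vals ! \<delta> = b \<and>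
     sort (vals[i:=a-t, j:=b+t]) = (sort vals)[\<alpha> := a-t, \<delta> := b+t]"
      by (meson order_trans)
    then show ?thesis using that by blast
  qed
  have lenv: "length vals = p" by (simp add: vals_def)
  define L where "L = sort vals"
  have lenL: "length L = p" by (simp add: L_def lenv)
  have Lpa: "L!\<alpha> = a" and Lpd: "L!\<delta> = b" using Lad by (auto simp: L_def)
  have "owl p w x' = (\<Sum>m<p. w (p-1-m) * (L[\<alpha> := a-t, \<delta> := b+t]) ! m)"
    unfolding owl_sum vals' srt L_def ..
  also have "\<dots> = (\<Sum>m<p. w (p-1-m) * L ! m + (if m = \<alpha> then w (p-1-m) * (a - t - L!\<alpha>) else 0)
        + (if m = \<delta> then w (p-1-m) * (b + t - L!\<delta>) else 0))"
    using ad lenL lenv by (intro sum.cong) (auto simp: nth_list_update algebra_simps)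
  also have "\<dots> = owl p w xh - t * (w (p-1-\<alpha>) - w (p-1-\<delta>))"
    using ad lenL lenv Lpa Lpd
    by (simp add: sum.distrib sum.delta owl_sum L_def vals_def algebra_simps)
  finally have owl': "owl p w x' = owl p w xh - t * (w (p-1-\<alpha>) - w (p-1-\<delta>))" .
  have "\<Delta> \<le> w (p-1-\<alpha>) - w (p-1-\<delta>)" unfolding \<Delta>_def
    using ad lenv by (intro w_gap wts) auto
  then have owlle: "owl p w x' \<le> owl p w xh - t * \<Delta>" using owl' t0
    by (smt (verit) mult_left_mono)
  have lin: "(\<Sum>k<p. A r k * x' k) - y r = e r + t * d r" for r
    unfolding x'_def e_def d_def using lin_pert[OF ij ineqj, of A r xh t si \<sigma>] by simp
  have "(\<Sum>r<n. ((\<Sum>k<p. A r k * x' k) - y r)\<^sup>2) = (\<Sum>r<n. (e r + t * d r)\<^sup>2)"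
    by (simp add: lin)
  also have "\<dots> = E + 2*t*(\<Sum>r<n. e r * d r) + t^2 * D"
    unfolding E_def D_def by (simp add: power2_eq_square algebra_simps sum.distrib sum_distrib_left)
  finally have quad: "(\<Sum>r<n. ((\<Sum>k<p. A r k * x' k) - y r)\<^sup>2) = E + 2*t*(\<Sum>r<n. e r * d r) + t^2 * D" .
  have objx': "owl_objective n p A y w x' \<le> owl_objective n p A y w xh + t * (t * D / 2 - \<epsilon>)"
  proof -
    have "owl_objective n p A y w x' = 1/2 * (E + 2*t*(\<Sum>r<n. e r * d r) + t^2 * D) + owl p w x'"
      unfolding owl_objective_def quad ..
    also have "\<dots> \<le> 1/2 * E + t * (norm2 n y * sqrt K) + t^2 * D / 2 + owl p w xh - t * \<Delta>"
    proof -
      have "t * (\<Sum>r<n. e r * d r) \<le> t * (norm2 n y * sqrt K)"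
        using ed t0 by (intro mult_left_mono) auto
      then show ?thesis using owlle by (simp add: algebra_simps)
    qed
    also have "\<dots> = owl_objective n p A y w xh + t * (t * D / 2 - \<epsilon>)"
      unfolding objx \<epsilon>_def by (simp add: algebra_simps power2_eq_square)
    finally show ?thesis .
  qed
  have "t * D / 2 < \<epsilon>"
  proof -
    have "t \<le> \<epsilon> / (D+1)" by (simp add: t_def)
    then have "t * (D + 1) \<le> \<epsilon>" using D0 by (simp add: pos_le_divide_eq)
    moreover have "0 \<le> t * D" using t0 D0 by simp
    ultimately show ?thesis using t0 by (simp add: distrib_left)
  qed
  then have "t * (t * D / 2 - \<epsilon>) < 0" using t0 by (simp add: mult_pos_neg)
  then show False using objx' minim[of x'] by simp
qed

lemma corr_sym: "corr n A i j = corr n A j i"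
  unfolding corr_def by (simp add: mult.commute)

theorem corollary1:
  fixes n p :: nat and A :: "nat \<Rightarrow> nat \<Rightarrow> real" and y w xh :: "nat \<Rightarrow> real"
    and i j :: nat
  assumes wts: "owl_weights p w"
    and mean0: "\<And>k. k < p \<Longrightarrow> (\<Sum>r<n. A r k) = 0"
    and unit: "\<And>k. k < p \<Longrightarrow> (\<Sum>r<n. (A r k)\<^sup>2) = 1"
    and minim: "\<And>x. owl_objective n p A y w xh \<le> owl_objective n p A y w x"
    and ij: "i < p" "j < p"
    and cond: "norm2 n y * sqrt (2 - 2 * corr n A i j * sgn (xh i * xh j)) < weight_gap p w"
  shows "\<bar>xh i\<bar> = \<bar>xh j\<bar>"
proof (rule ccontr)
  assume ne: "\<bar>xh i\<bar> \<noteq> \<bar>xh j\<bar>"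
  have cond': "norm2 n y * sqrt (2 - 2 * corr n A j i * sgn (xh j * xh i)) < weight_gap p w"
    using cond by (simp add: corr_sym[of n A i j] mult.commute)
  show False
  proof (cases "\<bar>xh j\<bar> < \<bar>xh i\<bar>")
    case True
    show False by (rule key[OF wts unit minim ij cond True])
  next
    case False
    then have "\<bar>xh i\<bar> < \<bar>xh j\<bar>" using ne by simp
    show False by (rule key[OF wts unit minim ij(2,1) cond' \<open>\<bar>xh i\<bar> < \<bar>xh j\<bar>\<close>])
  qed
qed

end
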